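(* Let $G=(V,(c_{xy})_{x,y\in V})$ be a connected weighted finite graph and $\alpha=(\alpha_x)_{x\in V}$ positive site-weights with $\min_{x\in V}\alpha_x\ge 1$. Then $\mathrm{gap}_{\rm SIP}(G,\alpha)=\mathrm{gap}_{\rm RW}(G,\alpha)$.
   Context: $G$ is a finite graph on vertex set $V$ with symmetric non-negative edge weights $c_{xy}=c_{yx}\ge0$, connected. For $k\in\mathbb N$, $\Xi_k:=\{\eta\in\mathbb N_0^V:\sum_x\eta_x=k\}$, and $\eta-\delta_x+\delta_y$ denotes moving one particle from $x$ to $y$. ${\rm SIP}_k(G,\alpha)$ is the Markov chain on $\Xi_k$ with generator $L_kf(\eta)=\sum_{x}\eta_x\sum_{y}c_{xy}(\alpha_y+\eta_y)(f(\eta-\delta_x+\delta_y)-f(\eta))$, reversible w.r.t. the probability measure $\mu_{\alpha,k}(\eta)\propto\prod_x\frac{\Gamma(\alpha_x+\eta_x)}{\Gamma(\alpha_x)\eta_x!}$; $\mathrm{gap}_k(G,\alpha)$ is the smallest nonzero eigenvalue of $-L_k$. $\mathrm{gap}_{\rm RW}(G,\alpha):=\mathrm{gap}_1(G,\alpha)$, which is the spectral gap of the random walk on $V$ with generator $A_\alpha f(x)=\sum_y c_{xy}\alpha_y(f(y)-f(x))$, and $\mathrm{gap}_{\rm SIP}(G,\alpha):=\inf_{k\ge2}\mathrm{gap}_k(G,\alpha)$. *)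

theory Defs
  imports Complex_Main
begin

definition weighted_graph :: "('v::finite \<Rightarrow> 'v \<Rightarrow> real) \<Rightarrow> bool" where
  "weighted_graph c \<longleftrightarrow> (\<forall>x y. c x y = c y x) \<and> (\<forall>x y. 0 \<le> c x y)"

definition graph_connected :: "('v::finite \<Rightarrow> 'v \<Rightarrow> real) \<Rightarrow> bool" where
  "graph_connected c \<longleftrightarrow> (\<forall>x y. (x, y) \<in> {(a, b). 0 < c a b}\<^sup>*)"

definition Xi :: "nat \<Rightarrow> ('v::finite \<Rightarrow> nat) set" where
  "Xi k = {\<eta>. (\<Sum>x\<in>UNIV. \<eta> x) = k}"

definition move :: "('v \<Rightarrow> nat) \<Rightarrow> 'v \<Rightarrow> 'v \<Rightarrow> ('v \<Rightarrow> nat)" where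
  "move \<eta> x y = (\<eta>(x := \<eta> x - 1))(y := (\<eta>(x := \<eta> x - 1)) y + 1)"

text \<open>Generator of SIP (same formula for every k; evaluated on configurations in Xi k).\<close>
definition SIP_gen :: "('v::finite \<Rightarrow> 'v \<Rightarrow> real) \<Rightarrow> ('v \<Rightarrow> real)
    \<Rightarrow> (('v \<Rightarrow> nat) \<Rightarrow> real) \<Rightarrow> ('v \<Rightarrow> nat) \<Rightarrow> real" where
  "SIP_gen c \<alpha> f \<eta> =
     (\<Sum>x\<in>UNIV. real (\<eta> x) * (\<Sum>y\<in>UNIV. c x y * (\<alpha> y + real (\<eta> y)) * (f (move \<eta> x y) - f \<eta>)))"

definition SIP_eigenvalue :: "('v::finite \<Rightarrow> 'v \<Rightarrow> real) \<Rightarrow> ('v \<Rightarrow> real) \<Rightarrow> nat \<Rightarrow> real \<Rightarrow> bool" where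
  "SIP_eigenvalue c \<alpha> k lam \<longleftrightarrow>
     (\<exists>f. (\<exists>\<eta>\<in>Xi k. f \<eta> \<noteq> 0) \<and> (\<forall>\<eta>\<in>Xi k. - SIP_gen c \<alpha> f \<eta> = lam * f \<eta>))"

definition gap :: "('v::finite \<Rightarrow> 'v \<Rightarrow> real) \<Rightarrow> ('v \<Rightarrow> real) \<Rightarrow> nat \<Rightarrow> real" where
  "gap c \<alpha> k = Inf {lam. lam \<noteq> 0 \<and> SIP_eigenvalue c \<alpha> k lam}"

definition gap_RW :: "('v::finite \<Rightarrow> 'v \<Rightarrow> real) \<Rightarrow> ('v \<Rightarrow> real) \<Rightarrow> real" where
  "gap_RW c \<alpha> = gap c \<alpha> 1"

definition gap_SIP :: "('v::finite \<Rightarrow> 'v \<Rightarrow> real) \<Rightarrow> ('v \<Rightarrow> real) \<Rightarrow> real" where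
  "gap_SIP c \<alpha> = (INF k\<in>{2..}. gap c \<alpha> k)"

end

theory Submission
  imports Defs "HOL-Analysis.Analysis" "HOL-Library.FuncSet"
begin

definition addp :: "('v \<Rightarrow> nat) \<Rightarrow> 'v \<Rightarrow> ('v \<Rightarrow> nat)" where
  "addp \<eta> a = \<eta>(a := \<eta> a + 1)"

lemma move_addp: "1 \<le> \<xi> x \<Longrightarrow> move (addp \<xi> a) x y = addp (move \<xi> x y) a"
  unfolding move_def addp_def by (auto simp: fun_eq_iff)

lemma move_addp_same: "move (addp \<xi> a) a y = addp \<xi> y"
  unfolding move_def addp_def by (auto simp: fun_eq_iff)

lemma move_self: "1 \<le> \<eta> x \<Longrightarrow> move \<eta> x x = \<eta>"
  unfolding move_def by (auto simp: fun_eq_iff)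

lemma addp_move_x: "1 \<le> \<xi> x \<Longrightarrow> addp (move \<xi> x y) x = addp \<xi> y"
  unfolding move_def addp_def by (auto simp: fun_eq_iff)

lemma move_val: "1 \<le> \<eta> x \<Longrightarrow> real (move \<eta> x y z) = real (\<eta> z) - (if z = x then 1 else 0) + (if z = y then 1 else 0)"
  unfolding move_def by (auto simp: of_nat_diff)

lemma addp_val: "real (addp \<eta> a z) = real (\<eta> z) + (if z = a then 1 else 0)"
  unfolding addp_def by auto

definition Pis :: "('v::finite \<Rightarrow> real) \<Rightarrow> (('v \<Rightarrow> nat) \<Rightarrow> real) \<Rightarrow> ('v \<Rightarrow> nat) \<Rightarrow> real" where
  "Pis \<alpha> g \<zeta> = (\<Sum>a\<in>UNIV. (\<alpha> a + real (\<zeta> a)) * g (addp \<zeta> a))"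

lemma antisym_sum:
  fixes K :: "'v::finite \<Rightarrow> 'v \<Rightarrow> real"
  assumes "\<And>x y. K x y = K y x"
  shows "(\<Sum>a\<in>UNIV. \<Sum>y\<in>UNIV. K a y * (h y - h a)) = 0"
proof -
  have "(\<Sum>a\<in>UNIV. \<Sum>y\<in>UNIV. K a y * h y) = (\<Sum>y\<in>UNIV. \<Sum>a\<in>UNIV. K a y * h y)"
    by (rule sum.swap)
  also have "\<dots> = (\<Sum>a\<in>UNIV. \<Sum>y\<in>UNIV. K a y * h a)"
    using assms by simp
  finally show ?thesis by (simp add: right_diff_distrib sum_subtractf)
qed

lemma core:
  fixes \<alpha> :: "'v::finite \<Rightarrow> real"
  assumes "1 \<le> \<xi> x"
  shows "(\<Sum>a\<in>UNIV. (\<alpha> a + real (\<xi> a)) * (\<alpha> y + real (addp \<xi> a y)) * (g (move (addp \<xi> a) x y) - g (addp \<xi> a)))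
     = (\<alpha> y + real (\<xi> y)) * (Pis \<alpha> g (move \<xi> x y) - Pis \<alpha> g \<xi>)"
proof -
  define \<xi>' where "\<xi>' = move \<xi> x y"
  define \<beta> where "\<beta> a = \<alpha> a + real (\<xi> a)" for a
  define D where "D a = g (addp \<xi>' a) - g (addp \<xi> a)" for a
  have "(\<Sum>a\<in>UNIV. (\<alpha> a + real (\<xi> a)) * (\<alpha> y + real (addp \<xi> a y)) * (g (move (addp \<xi> a) x y) - g (addp \<xi> a)))
      = (\<Sum>a\<in>UNIV. \<beta> y * (\<beta> a * D a) + (if a = y then \<beta> a * D a else 0))"
    using assms by (intro sum.cong) (auto simp: move_addp addp_val \<beta>_def D_def \<xi>'_def algebra_simps)
  also have "\<dots> = \<beta> y * (\<Sum>a\<in>UNIV. \<beta> a * D a) + \<beta> y * D y"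
    by (simp add: sum.distrib sum_distrib_left)
  finally have L: "(\<Sum>a\<in>UNIV. (\<alpha> a + real (\<xi> a)) * (\<alpha> y + real (addp \<xi> a y)) * (g (move (addp \<xi> a) x y) - g (addp \<xi> a)))
      = \<beta> y * (\<Sum>a\<in>UNIV. \<beta> a * D a) + \<beta> y * D y" .
  have "Pis \<alpha> g \<xi>' = (\<Sum>a\<in>UNIV. \<beta> a * g (addp \<xi>' a) - (if a = x then g (addp \<xi>' a) else 0) + (if a = y then g (addp \<xi>' a) else 0))"
    unfolding Pis_def \<xi>'_def using assms
    by (intro sum.cong) (auto simp: move_val \<beta>_def algebra_simps)
  also have "\<dots> = (\<Sum>a\<in>UNIV. \<beta> a * g (addp \<xi>' a)) - g (addp \<xi>' x) + g (addp \<xi>' y)"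
    by (simp add: sum.distrib sum_subtractf)
  finally have P1: "Pis \<alpha> g \<xi>' = (\<Sum>a\<in>UNIV. \<beta> a * g (addp \<xi>' a)) - g (addp \<xi> y) + g (addp \<xi>' y)"
    using assms by (simp add: \<xi>'_def addp_move_x)
  have P2: "Pis \<alpha> g \<xi> = (\<Sum>a\<in>UNIV. \<beta> a * g (addp \<xi> a))"
    unfolding Pis_def \<beta>_def by simp
  have SD: "(\<Sum>a\<in>UNIV. \<beta> a * D a) = (\<Sum>a\<in>UNIV. \<beta> a * g (addp \<xi>' a)) - (\<Sum>a\<in>UNIV. \<beta> a * g (addp \<xi> a))"
    unfolding D_def by (simp add: right_diff_distrib sum_subtractf)
  have "\<beta> y * (\<Sum>a\<in>UNIV. \<beta> a * D a) + \<beta> y * D y = \<beta> y * (Pis \<alpha> g \<xi>' - Pis \<alpha> g \<xi>)"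
    unfolding P1 P2 SD by (simp add: D_def algebra_simps)
  then show ?thesis unfolding L \<xi>'_def \<beta>_def by simp
qed

lemma intertwine:
  fixes c :: "'v::finite \<Rightarrow> 'v \<Rightarrow> real" and \<alpha> :: "'v \<Rightarrow> real"
  assumes csym: "\<And>x y. c x y = c y x"
  shows "SIP_gen c \<alpha> (Pis \<alpha> g) \<xi> = (\<Sum>a\<in>UNIV. (\<alpha> a + real (\<xi> a)) * SIP_gen c \<alpha> g (addp \<xi> a))"
proof -
  define \<beta> where "\<beta> a = \<alpha> a + real (\<xi> a)" for a
  define I where "I a x = (\<Sum>y\<in>UNIV. c x y * (\<alpha> y + real (addp \<xi> a y)) * (g (move (addp \<xi> a) x y) - g (addp \<xi> a)))" for a x
  have S: "SIP_gen c \<alpha> g (addp \<xi> a) = (\<Sum>x\<in>UNIV. real (\<xi> x) * I a x) + I a a" for a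
  proof -
    have "SIP_gen c \<alpha> g (addp \<xi> a) = (\<Sum>x\<in>UNIV. real (\<xi> x) * I a x + (if x = a then I a x else 0))"
      unfolding SIP_gen_def I_def by (intro sum.cong) (auto simp: addp_val algebra_simps)
    then show ?thesis by (simp add: sum.distrib)
  qed
  have Iaa: "I a a = (\<Sum>y\<in>UNIV. c a y * \<beta> y * (g (addp \<xi> y) - g (addp \<xi> a)))" for a
    unfolding I_def by (intro sum.cong) (auto simp: move_addp_same addp_val \<beta>_def)
  have Z: "(\<Sum>a\<in>UNIV. \<beta> a * I a a) = 0"
  proof -
    have "(\<Sum>a\<in>UNIV. \<beta> a * I a a) = (\<Sum>a\<in>UNIV. \<Sum>y\<in>UNIV. (\<beta> a * \<beta> y * c a y) * (g (addp \<xi> y) - g (addp \<xi> a)))"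
      unfolding Iaa sum_distrib_left by (simp add: algebra_simps)
    also have "\<dots> = 0" by (rule antisym_sum) (simp add: csym mult.commute)
    finally show ?thesis .
  qed
  have "(\<Sum>a\<in>UNIV. \<beta> a * SIP_gen c \<alpha> g (addp \<xi> a)) = (\<Sum>a\<in>UNIV. \<Sum>x\<in>UNIV. \<beta> a * (real (\<xi> x) * I a x))"
    unfolding S using Z by (simp add: distrib_left sum.distrib sum_distrib_left)
  also have "\<dots> = (\<Sum>x\<in>UNIV. \<Sum>a\<in>UNIV. \<beta> a * (real (\<xi> x) * I a x))" by (rule sum.swap)
  also have "\<dots> = (\<Sum>x\<in>UNIV. real (\<xi> x) * (\<Sum>y\<in>UNIV. c x y * (\<alpha> y + real (\<xi> y)) * (Pis \<alpha> g (move \<xi> x y) - Pis \<alpha> g \<xi>)))"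
  proof (rule sum.cong[OF refl])
    fix x
    show "(\<Sum>a\<in>UNIV. \<beta> a * (real (\<xi> x) * I a x)) = real (\<xi> x) * (\<Sum>y\<in>UNIV. c x y * (\<alpha> y + real (\<xi> y)) * (Pis \<alpha> g (move \<xi> x y) - Pis \<alpha> g \<xi>))"
    proof (cases "\<xi> x = 0")
      case True then show ?thesis by simp
    next
      case False
      then have x1: "1 \<le> \<xi> x" by simp
      have "(\<Sum>a\<in>UNIV. \<beta> a * (real (\<xi> x) * I a x)) = real (\<xi> x) * (\<Sum>a\<in>UNIV. \<Sum>y\<in>UNIV. c x y * (\<beta> a * (\<alpha> y + real (addp \<xi> a y)) * (g (move (addp \<xi> a) x y) - g (addp \<xi> a))))"
        unfolding I_def sum_distrib_left by (intro sum.cong refl) (simp add: algebra_simps)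
      also have "\<dots> = real (\<xi> x) * (\<Sum>y\<in>UNIV. c x y * (\<Sum>a\<in>UNIV. \<beta> a * (\<alpha> y + real (addp \<xi> a y)) * (g (move (addp \<xi> a) x y) - g (addp \<xi> a))))"
        by (subst sum.swap) (simp add: sum_distrib_left)
      also have "\<dots> = real (\<xi> x) * (\<Sum>y\<in>UNIV. c x y * (\<alpha> y + real (\<xi> y)) * (Pis \<alpha> g (move \<xi> x y) - Pis \<alpha> g \<xi>))"
        using core[where \<xi>=\<xi> and x=x and \<alpha>=\<alpha> and g=g, OF x1] unfolding \<beta>_def by (simp add: mult.assoc)
      finally show ?thesis .
    qed
  qed
  finally show ?thesis unfolding SIP_gen_def \<beta>_def by simp
qed

lemma Xi_le: "\<eta> \<in> Xi k \<Longrightarrow> \<eta> (x::'v::finite) \<le> k"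
  unfolding Xi_def using member_le_sum[of x UNIV \<eta>] by auto

lemma finite_Xi: "finite (Xi k :: ('v::finite \<Rightarrow> nat) set)"
proof -
  have "Xi k \<subseteq> PiE (UNIV::'v set) (\<lambda>_. {..k})"
    using Xi_le by (auto simp: PiE_iff)
  then show ?thesis by (rule finite_subset) (intro finite_PiE, auto)
qed

lemma sum_upd_nat:
  fixes \<eta> :: "'v::finite \<Rightarrow> nat"
  shows "(\<Sum>x\<in>UNIV. (\<eta>(a := v)) x) + \<eta> a = (\<Sum>x\<in>UNIV. \<eta> x) + v"
proof -
  have "(\<Sum>x\<in>UNIV. (\<eta>(a := v)) x) = v + (\<Sum>x\<in>UNIV - {a}. \<eta> x)"
    by (subst sum.remove[of _ a]) (auto intro!: sum.cong)
  moreover have "(\<Sum>x\<in>UNIV. \<eta> x) = \<eta> a + (\<Sum>x\<in>UNIV - {a}. \<eta> x)"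
    by (subst sum.remove[of _ a]) auto
  ultimately show ?thesis by simp
qed

lemma addp_Xi: "\<xi> \<in> Xi j \<Longrightarrow> addp \<xi> (a::'v::finite) \<in> Xi (Suc j)"
  unfolding Xi_def addp_def using sum_upd_nat[of \<xi> a "\<xi> a + 1"] by auto

lemma addp_inj: "inj_on (\<lambda>\<xi>. addp \<xi> x) A"
  unfolding addp_def inj_on_def by (auto simp: fun_eq_iff)

lemma addp_image: "(\<lambda>\<xi>. addp \<xi> (x::'v::finite)) ` Xi j = {\<eta> \<in> Xi (Suc j). \<eta> x \<noteq> 0}"
proof (intro equalityI subsetI)
  fix \<eta> assume "\<eta> \<in> (\<lambda>\<xi>. addp \<xi> x) ` Xi j"
  then show "\<eta> \<in> {\<eta> \<in> Xi (Suc j). \<eta> x \<noteq> 0}" using addp_Xi by (auto simp: addp_def)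
next
  fix \<eta> assume h: "\<eta> \<in> {\<eta> \<in> Xi (Suc j). \<eta> x \<noteq> 0}"
  define \<xi> where "\<xi> = \<eta>(x := \<eta> x - 1)"
  have "\<eta> = addp \<xi> x" using h by (auto simp: \<xi>_def addp_def fun_eq_iff)
  moreover have "\<xi> \<in> Xi j" using h sum_upd_nat[of \<eta> x "\<eta> x - 1"] by (auto simp: Xi_def \<xi>_def)
  ultimately show "\<eta> \<in> (\<lambda>\<xi>. addp \<xi> x) ` Xi j" by blast
qed

lemma reindex:
  fixes F :: "('v::finite \<Rightarrow> nat) \<Rightarrow> 'v \<Rightarrow> real"
  shows "(\<Sum>\<eta>\<in>Xi (Suc j). \<Sum>x\<in>UNIV. real (\<eta> x) * F \<eta> x)
       = (\<Sum>\<xi>\<in>Xi j. \<Sum>x\<in>UNIV. real (\<xi> x + 1) * F (addp \<xi> x) x)"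
proof -
  have "(\<Sum>\<eta>\<in>Xi (Suc j). \<Sum>x\<in>UNIV. real (\<eta> x) * F \<eta> x) = (\<Sum>x\<in>UNIV. \<Sum>\<eta>\<in>Xi (Suc j). real (\<eta> x) * F \<eta> x)"
    by (rule sum.swap)
  also have "\<dots> = (\<Sum>x\<in>UNIV. \<Sum>\<xi>\<in>Xi j. real (\<xi> x + 1) * F (addp \<xi> x) x)"
  proof (rule sum.cong[OF refl])
    fix x
    have "(\<Sum>\<eta>\<in>Xi (Suc j). real (\<eta> x) * F \<eta> x) = (\<Sum>\<eta>\<in>{\<eta> \<in> Xi (Suc j). \<eta> x \<noteq> 0}. real (\<eta> x) * F \<eta> x)"
      by (rule sum.mono_neutral_right[OF finite_Xi]) auto
    also have "\<dots> = (\<Sum>\<eta>\<in>(\<lambda>\<xi>. addp \<xi> x) ` Xi j. real (\<eta> x) * F \<eta> x)"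
      by (simp add: addp_image)
    also have "\<dots> = (\<Sum>\<xi>\<in>Xi j. real (\<xi> x + 1) * F (addp \<xi> x) x)"
      by (subst sum.reindex[OF addp_inj]) (simp add: addp_def)
    finally show "(\<Sum>\<eta>\<in>Xi (Suc j). real (\<eta> x) * F \<eta> x) = (\<Sum>\<xi>\<in>Xi j. real (\<xi> x + 1) * F (addp \<xi> x) x)" .
  qed
  also have "\<dots> = (\<Sum>\<xi>\<in>Xi j. \<Sum>x\<in>UNIV. real (\<xi> x + 1) * F (addp \<xi> x) x)"
    by (rule sum.swap)
  finally show ?thesis .
qed

definition pw :: "real \<Rightarrow> nat \<Rightarrow> real" where
  "pw a n = (\<Prod>i<n. (a + real i) / (real i + 1))"

definition wt :: "('v::finite \<Rightarrow> real) \<Rightarrow> ('v \<Rightarrow> nat) \<Rightarrow> real" where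
  "wt \<alpha> \<eta> = (\<Prod>x\<in>UNIV. pw (\<alpha> x) (\<eta> x))"

lemma pw_pos: "0 < a \<Longrightarrow> 0 < pw a n"
  unfolding pw_def by (intro prod_pos) (auto intro: divide_pos_pos add_pos_nonneg)

lemma wt_pos: "(\<And>x. 0 < \<alpha> x) \<Longrightarrow> 0 < wt \<alpha> \<eta>"
  unfolding wt_def by (intro prod_pos pw_pos) auto

lemma pw_Suc: "pw a (Suc n) = pw a n * ((a + real n) / (real n + 1))"
  unfolding pw_def by (simp add: lessThan_Suc)

lemma pw_Suc': "real (n + 1) * pw a (n + 1) = pw a n * (a + real n)"
proof -
  have nz: "1 + real n \<noteq> 0" by linarith
  have e: "(a + real n) / (real n + 1) * (1 + real n) = a + real n"
    using nz by (simp add: add.commute)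
  have "real (n + 1) * pw a (n + 1) = (1 + real n) * (pw a n * ((a + real n) / (real n + 1)))"
    unfolding Suc_eq_plus1[symmetric] pw_Suc of_nat_Suc ..
  also have "\<dots> = pw a n * ((a + real n) / (real n + 1) * (1 + real n))"
    by (simp only: mult_ac)
  finally show ?thesis unfolding e .
qed

lemma wt_addp: "real (\<xi> x + 1) * wt \<alpha> (addp \<xi> x) = wt \<alpha> \<xi> * (\<alpha> x + real (\<xi> x))"
proof -
  define P where "P = (\<Prod>z\<in>UNIV - {x}. pw (\<alpha> z) (\<xi> z))"
  have W1: "wt \<alpha> (addp \<xi> x) = pw (\<alpha> x) (\<xi> x + 1) * P"
    unfolding wt_def P_def by (subst prod.remove[of _ x]) (auto simp: addp_def intro!: prod.cong)
  have W2: "wt \<alpha> \<xi> = pw (\<alpha> x) (\<xi> x) * P"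
    unfolding wt_def P_def by (subst prod.remove[of _ x]) auto
  have "real (\<xi> x + 1) * wt \<alpha> (addp \<xi> x) = (real (\<xi> x + 1) * pw (\<alpha> x) (\<xi> x + 1)) * P"
    unfolding W1 by (simp only: mult.assoc)
  also have "\<dots> = (pw (\<alpha> x) (\<xi> x) * (\<alpha> x + real (\<xi> x))) * P"
    by (simp only: pw_Suc')
  also have "\<dots> = wt \<alpha> \<xi> * (\<alpha> x + real (\<xi> x))"
    unfolding W2 by (simp only: mult_ac)
  finally show ?thesis .
qed

lemma R2:
  fixes g :: "('v::finite \<Rightarrow> nat) \<Rightarrow> real"
  shows "real (Suc j) * (\<Sum>\<eta>\<in>Xi (Suc j). wt \<alpha> \<eta> * (g \<eta>)\<^sup>2)
       = (\<Sum>\<xi>\<in>Xi j. wt \<alpha> \<xi> * (\<Sum>x\<in>UNIV. (\<alpha> x + real (\<xi> x)) * (g (addp \<xi> x))\<^sup>2))"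
proof -
  have "real (Suc j) * (\<Sum>\<eta>\<in>Xi (Suc j). wt \<alpha> \<eta> * (g \<eta>)\<^sup>2)
      = (\<Sum>\<eta>\<in>Xi (Suc j). \<Sum>x\<in>UNIV. real (\<eta> x) * (wt \<alpha> \<eta> * (g \<eta>)\<^sup>2))"
    unfolding sum_distrib_left
  proof (rule sum.cong[OF refl])
    fix \<eta> :: "'v \<Rightarrow> nat" assume "\<eta> \<in> Xi (Suc j)"
    then have "real (Suc j) = (\<Sum>x\<in>UNIV. real (\<eta> x))" unfolding Xi_def by (simp flip: of_nat_sum)
    then show "real (Suc j) * (wt \<alpha> \<eta> * (g \<eta>)\<^sup>2) = (\<Sum>x\<in>UNIV. real (\<eta> x) * (wt \<alpha> \<eta> * (g \<eta>)\<^sup>2))"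
      by (simp add: sum_distrib_right)
  qed
  also have "\<dots> = (\<Sum>\<xi>\<in>Xi j. \<Sum>x\<in>UNIV. real (\<xi> x + 1) * (wt \<alpha> (addp \<xi> x) * (g (addp \<xi> x))\<^sup>2))"
    by (rule reindex)
  also have "\<dots> = (\<Sum>\<xi>\<in>Xi j. wt \<alpha> \<xi> * (\<Sum>x\<in>UNIV. (\<alpha> x + real (\<xi> x)) * (g (addp \<xi> x))\<^sup>2))"
    unfolding sum_distrib_left
  proof (intro sum.cong refl)
    fix \<xi> :: "'v \<Rightarrow> nat" and x
    have "real (\<xi> x + 1) * (wt \<alpha> (addp \<xi> x) * (g (addp \<xi> x))\<^sup>2) = (real (\<xi> x + 1) * wt \<alpha> (addp \<xi> x)) * (g (addp \<xi> x))\<^sup>2"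
      by (rule mult.assoc[symmetric])
    then show "real (\<xi> x + 1) * (wt \<alpha> (addp \<xi> x) * (g (addp \<xi> x))\<^sup>2) = wt \<alpha> \<xi> * ((\<alpha> x + real (\<xi> x)) * (g (addp \<xi> x))\<^sup>2)"
      unfolding wt_addp by (simp only: mult.assoc)
  qed
  finally show ?thesis .
qed

lemma R1:
  fixes g :: "('v::finite \<Rightarrow> nat) \<Rightarrow> real"
  shows "(\<Sum>\<eta>\<in>Xi (Suc j). wt \<alpha> \<eta> * g \<eta> * SIP_gen c \<alpha> g \<eta>)
       = (\<Sum>\<xi>\<in>Xi j. wt \<alpha> \<xi> * (\<Sum>x\<in>UNIV. \<Sum>y\<in>UNIV. (\<alpha> x + real (\<xi> x)) * (\<alpha> y + real (\<xi> y)) * c x y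
              * g (addp \<xi> x) * (g (addp \<xi> y) - g (addp \<xi> x))))"
proof -
  define S where "S \<eta> x = (\<Sum>y\<in>UNIV. c x y * (\<alpha> y + real (\<eta> y)) * (g (move \<eta> x y) - g \<eta>))" for \<eta> x
  have "(\<Sum>\<eta>\<in>Xi (Suc j). wt \<alpha> \<eta> * g \<eta> * SIP_gen c \<alpha> g \<eta>)
      = (\<Sum>\<eta>\<in>Xi (Suc j). \<Sum>x\<in>UNIV. real (\<eta> x) * (wt \<alpha> \<eta> * g \<eta> * S \<eta> x))"
  proof (intro sum.cong refl)
    fix \<eta> :: "'v \<Rightarrow> nat"
    have SS: "SIP_gen c \<alpha> g \<eta> = (\<Sum>x\<in>UNIV. real (\<eta> x) * S \<eta> x)" by (simp add: SIP_gen_def S_def)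
    show "wt \<alpha> \<eta> * g \<eta> * SIP_gen c \<alpha> g \<eta> = (\<Sum>x\<in>UNIV. real (\<eta> x) * (wt \<alpha> \<eta> * g \<eta> * S \<eta> x))"
      unfolding SS sum_distrib_left by (intro sum.cong refl) (simp only: mult_ac)
  qed
  also have "\<dots> = (\<Sum>\<xi>\<in>Xi j. \<Sum>x\<in>UNIV. real (\<xi> x + 1) * (wt \<alpha> (addp \<xi> x) * g (addp \<xi> x) * S (addp \<xi> x) x))"
    by (rule reindex)
  also have "\<dots> = (\<Sum>\<xi>\<in>Xi j. wt \<alpha> \<xi> * (\<Sum>x\<in>UNIV. \<Sum>y\<in>UNIV. (\<alpha> x + real (\<xi> x)) * (\<alpha> y + real (\<xi> y)) * c x y
              * g (addp \<xi> x) * (g (addp \<xi> y) - g (addp \<xi> x))))"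
  proof (intro sum.cong refl)
    fix \<xi> :: "'v \<Rightarrow> nat"
    have Sx: "S (addp \<xi> x) x = (\<Sum>y\<in>UNIV. c x y * (\<alpha> y + real (\<xi> y)) * (g (addp \<xi> y) - g (addp \<xi> x)))" for x
      unfolding S_def by (intro sum.cong) (auto simp: move_addp_same addp_val)
    show "(\<Sum>x\<in>UNIV. real (\<xi> x + 1) * (wt \<alpha> (addp \<xi> x) * g (addp \<xi> x) * S (addp \<xi> x) x)) =
         wt \<alpha> \<xi> * (\<Sum>x\<in>UNIV. \<Sum>y\<in>UNIV. (\<alpha> x + real (\<xi> x)) * (\<alpha> y + real (\<xi> y)) * c x y * g (addp \<xi> x) * (g (addp \<xi> y) - g (addp \<xi> x)))"
      unfolding sum_distrib_left
    proof (intro sum.cong refl)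
      fix x
      have WA: "real (\<xi> x + 1) * (wt \<alpha> (addp \<xi> x) * g (addp \<xi> x) * S (addp \<xi> x) x)
          = (wt \<alpha> \<xi> * (\<alpha> x + real (\<xi> x))) * (g (addp \<xi> x) * S (addp \<xi> x) x)"
        by (simp only: wt_addp flip: mult.assoc)
      show "real (\<xi> x + 1) * (wt \<alpha> (addp \<xi> x) * g (addp \<xi> x) * S (addp \<xi> x) x) =
          (\<Sum>y\<in>UNIV. wt \<alpha> \<xi> * ((\<alpha> x + real (\<xi> x)) * (\<alpha> y + real (\<xi> y)) * c x y * g (addp \<xi> x) * (g (addp \<xi> y) - g (addp \<xi> x))))"
        unfolding WA unfolding Sx sum_distrib_left by (intro sum.cong refl) (simp only: mult_ac)
    qed
  qed
  finally show ?thesis .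
qed

definition Dir :: "('v::finite \<Rightarrow> 'v \<Rightarrow> real) \<Rightarrow> ('v \<Rightarrow> real) \<Rightarrow> ('v \<Rightarrow> real) \<Rightarrow> real" where
  "Dir c b h = (\<Sum>x\<in>UNIV. \<Sum>y\<in>UNIV. b x * b y * c x y * (h y - h x)\<^sup>2) / 2"

definition RWgen :: "('v::finite \<Rightarrow> 'v \<Rightarrow> real) \<Rightarrow> ('v \<Rightarrow> real) \<Rightarrow> ('v \<Rightarrow> real) \<Rightarrow> 'v \<Rightarrow> real" where
  "RWgen c \<alpha> f x = (\<Sum>y\<in>UNIV. c x y * \<alpha> y * (f y - f x))"

lemma polar:
  fixes K :: "'v::finite \<Rightarrow> 'v \<Rightarrow> real"
  assumes "\<And>x y. K x y = K y x"
  shows "(\<Sum>x\<in>UNIV. \<Sum>y\<in>UNIV. K x y * ((f y - f x) * (h y - h x))) = - 2 * (\<Sum>x\<in>UNIV. \<Sum>y\<in>UNIV. K x y * h x * (f y - f x))"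
proof -
  have A: "(\<Sum>x\<in>UNIV. \<Sum>y\<in>UNIV. K x y * ((f y - f x) * (h y - h x)))
      = (\<Sum>x\<in>UNIV. \<Sum>y\<in>UNIV. K x y * h y * (f y - f x)) - (\<Sum>x\<in>UNIV. \<Sum>y\<in>UNIV. K x y * h x * (f y - f x))"
  proof -
    have "(\<Sum>x\<in>UNIV. \<Sum>y\<in>UNIV. K x y * ((f y - f x) * (h y - h x)))
      = (\<Sum>x\<in>UNIV. \<Sum>y\<in>UNIV. K x y * h y * (f y - f x) - K x y * h x * (f y - f x))"
      by (intro sum.cong refl) (simp add: algebra_simps)
    then show ?thesis by (simp only: sum_subtractf)
  qed
  have "(\<Sum>x\<in>UNIV. \<Sum>y\<in>UNIV. K x y * h y * (f y - f x)) = (\<Sum>y\<in>UNIV. \<Sum>x\<in>UNIV. K x y * h y * (f y - f x))"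
    by (rule sum.swap)
  also have "\<dots> = - (\<Sum>x\<in>UNIV. \<Sum>y\<in>UNIV. K x y * h x * (f y - f x))"
  proof -
    have "(\<Sum>y\<in>UNIV. \<Sum>x\<in>UNIV. K x y * h y * (f y - f x)) = (\<Sum>x\<in>UNIV. \<Sum>y\<in>UNIV. - (K x y * h x * (f y - f x)))"
      by (intro sum.cong refl) (simp add: assms algebra_simps)
    then show ?thesis by (simp only: sum_negf)
  qed
  finally show ?thesis unfolding A by simp
qed

lemma Dir_nonneg:
  assumes "\<And>x y. 0 \<le> c x y" "\<And>x. 0 \<le> b x"
  shows "0 \<le> Dir c b h"
  unfolding Dir_def using assms by (intro divide_nonneg_pos sum_nonneg mult_nonneg_nonneg) auto

lemma Dir_as_gen:
  fixes c :: "'v::finite \<Rightarrow> 'v \<Rightarrow> real"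
  assumes "\<And>x y. c x y = c y x"
  shows "Dir c b h = - (\<Sum>x\<in>UNIV. \<Sum>y\<in>UNIV. b x * b y * c x y * h x * (h y - h x))"
proof -
  have "(\<Sum>x\<in>UNIV. \<Sum>y\<in>UNIV. b x * b y * c x y * ((h y - h x) * (h y - h x))) = - 2 * (\<Sum>x\<in>UNIV. \<Sum>y\<in>UNIV. b x * b y * c x y * h x * (h y - h x))"
    by (rule polar) (simp add: assms mult_ac)
  then show ?thesis unfolding Dir_def power2_eq_square by simp
qed

lemma Dir_shift: "Dir c b (\<lambda>x. h x + m) = Dir c b h"
  unfolding Dir_def by simp

lemma Dir_scale: "Dir c b (\<lambda>x. r * h x) = r\<^sup>2 * Dir c b h"
proof -
  have "(\<Sum>x\<in>UNIV. \<Sum>y\<in>UNIV. b x * b y * c x y * (r * h y - r * h x)\<^sup>2) = (\<Sum>x\<in>UNIV. \<Sum>y\<in>UNIV. r\<^sup>2 * (b x * b y * c x y * (h y - h x)\<^sup>2))"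
    by (intro sum.cong refl) (simp add: power2_eq_square algebra_simps)
  then show ?thesis unfolding Dir_def by (simp only: sum_distrib_left[symmetric])
qed

lemma aux_div: "((a::real) + 2 * t * b + t\<^sup>2 * c) / 2 = a / 2 + t * b + t\<^sup>2 * (c / 2)"
  by (simp add: field_simps)

lemma Dir_expand:
  fixes c :: "'v::finite \<Rightarrow> 'v \<Rightarrow> real"
  assumes "\<And>x y. c x y = c y x"
  shows "Dir c b (\<lambda>x. f x + t * h x) = Dir c b f - 2 * t * (\<Sum>x\<in>UNIV. b x * h x * (\<Sum>y\<in>UNIV. c x y * b y * (f y - f x))) + t\<^sup>2 * Dir c b h"
proof -
  define K where "K x y = b x * b y * c x y" for x y
  have Ks: "K x y = K y x" for x y unfolding K_def by (simp add: assms mult_ac)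
  have "Dir c b (\<lambda>x. f x + t * h x) = (\<Sum>x\<in>UNIV. \<Sum>y\<in>UNIV. K x y * (f y - f x)\<^sup>2 + (2 * t) * (K x y * ((f y - f x) * (h y - h x))) + t\<^sup>2 * (K x y * (h y - h x)\<^sup>2)) / 2"
    unfolding Dir_def K_def by (intro arg_cong[where f="\<lambda>z. z / 2"] sum.cong refl) (simp add: power2_eq_square algebra_simps)
  also have "\<dots> = Dir c b f + t * (\<Sum>x\<in>UNIV. \<Sum>y\<in>UNIV. K x y * ((f y - f x) * (h y - h x))) + t\<^sup>2 * Dir c b h"
    unfolding Dir_def K_def by (simp only: sum.distrib sum_distrib_left[symmetric] aux_div)
  also have "(\<Sum>x\<in>UNIV. \<Sum>y\<in>UNIV. K x y * ((f y - f x) * (h y - h x))) = - 2 * (\<Sum>x\<in>UNIV. \<Sum>y\<in>UNIV. K x y * h x * (f y - f x))"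
    by (rule polar[OF Ks])
  also have "(\<Sum>x\<in>UNIV. \<Sum>y\<in>UNIV. K x y * h x * (f y - f x)) = (\<Sum>x\<in>UNIV. b x * h x * (\<Sum>y\<in>UNIV. c x y * b y * (f y - f x)))"
    unfolding K_def sum_distrib_left by (intro sum.cong refl) (simp only: mult_ac)
  finally show ?thesis by simp
qed

lemma quad_zero:
  fixes B C :: real
  assumes "\<And>t. 0 \<le> t * B + t\<^sup>2 * C"
  shows "B = 0"
proof (rule ccontr)
  assume nz: "B \<noteq> 0"
  define D where "D = \<bar>C\<bar> + 1"
  have Dp: "0 < D" unfolding D_def by simp
  define t where "t = - B / D"
  have "t\<^sup>2 * C \<le> t\<^sup>2 * \<bar>C\<bar>" by (intro mult_left_mono) auto
  also have "t\<^sup>2 * \<bar>C\<bar> = B\<^sup>2 * (D - 1) / D\<^sup>2" unfolding t_def D_def by (simp add: power_divide)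
  finally have a: "t * B + t\<^sup>2 * C \<le> - B\<^sup>2 / D + B\<^sup>2 * (D - 1) / D\<^sup>2"
    unfolding t_def by (simp add: power2_eq_square)
  have "- B\<^sup>2 / D + B\<^sup>2 * (D - 1) / D\<^sup>2 = - B\<^sup>2 / D\<^sup>2"
    using Dp by (simp add: field_simps power2_eq_square)
  also have "\<dots> < 0" using nz Dp by simp
  finally show False using a assms[of t] by linarith
qed


definition Nf :: "('v::finite \<Rightarrow> real) \<Rightarrow> ('v \<Rightarrow> real) \<Rightarrow> real" where
  "Nf \<alpha> h = (\<Sum>x\<in>UNIV. \<alpha> x * (h x)\<^sup>2)"

definition Mf :: "('v::finite \<Rightarrow> real) \<Rightarrow> ('v \<Rightarrow> real) \<Rightarrow> real" where
  "Mf \<alpha> h = (\<Sum>x\<in>UNIV. \<alpha> x * h x)"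

lemma Nf_scale: "Nf \<alpha> (\<lambda>x. r * h x) = r\<^sup>2 * Nf \<alpha> h"
  unfolding Nf_def sum_distrib_left by (intro sum.cong refl) (simp add: power_mult_distrib)

lemma Mf_scale: "Mf \<alpha> (\<lambda>x. r * h x) = r * Mf \<alpha> h"
  unfolding Mf_def sum_distrib_left by (intro sum.cong refl) simp

lemma Nf_nonneg: "(\<And>x. 0 \<le> \<alpha> x) \<Longrightarrow> 0 \<le> Nf \<alpha> h"
  unfolding Nf_def by (intro sum_nonneg) auto

lemma Mf_add: "Mf \<alpha> (\<lambda>x. f x + t * h x) = Mf \<alpha> f + t * Mf \<alpha> h"
  unfolding Mf_def sum_distrib_left by (simp add: distrib_left sum.distrib mult_ac)

lemma Nf_expand: "Nf \<alpha> (\<lambda>x. f x + t * h x) = Nf \<alpha> f + t * (2 * (\<Sum>x\<in>UNIV. \<alpha> x * f x * h x)) + t\<^sup>2 * Nf \<alpha> h"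
proof -
  have "Nf \<alpha> (\<lambda>x. f x + t * h x) = (\<Sum>x\<in>UNIV. \<alpha> x * (f x)\<^sup>2 + t * (2 * (\<alpha> x * f x * h x)) + t\<^sup>2 * (\<alpha> x * (h x)\<^sup>2))"
    unfolding Nf_def by (intro sum.cong refl) (simp add: power2_eq_square algebra_simps)
  then show ?thesis unfolding Nf_def by (simp only: sum.distrib sum_distrib_left[symmetric])
qed

lemma Nf_zero: "(\<And>x. 0 < \<alpha> x) \<Longrightarrow> Nf \<alpha> h = 0 \<Longrightarrow> h x = 0"
proof -
  assume ap: "\<And>x. 0 < \<alpha> x" and z: "Nf \<alpha> h = 0"
  have "\<alpha> x * (h x)\<^sup>2 \<le> Nf \<alpha> h" unfolding Nf_def
    by (rule member_le_sum) (auto intro: mult_nonneg_nonneg less_imp_le[OF ap])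
  then have "\<alpha> x * (h x)\<^sup>2 \<le> 0" using z by simp
  moreover have "0 \<le> (h x)\<^sup>2" by simp
  ultimately have "(h x)\<^sup>2 = 0" using ap[of x]
    by (metis mult_le_0_iff not_le order_antisym)
  then show "h x = 0" by simp
qed

lemma rw_spectral:
  fixes c :: "'v::finite \<Rightarrow> 'v \<Rightarrow> real" and \<alpha> :: "'v \<Rightarrow> real"
  assumes csym: "\<And>x y. c x y = c y x" and cnn: "\<And>x y. 0 \<le> c x y"
    and conn: "\<And>x y. (x, y) \<in> {(a, b). 0 < c a b}\<^sup>*"
    and apos: "\<And>x. 0 < \<alpha> x" and age1: "\<And>x. 1 \<le> \<alpha> x"
    and two: "a \<noteq> (b::'v)"
  shows "\<exists>q f. 0 < q \<and> (\<exists>x. f x \<noteq> 0) \<and> (\<forall>x. RWgen c \<alpha> f x = - q * f x)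
     \<and> (\<forall>h. Mf \<alpha> h = 0 \<longrightarrow> q * Nf \<alpha> h \<le> Dir c \<alpha> h)"
proof -
  have ann: "0 \<le> \<alpha> x" for x using apos[of x] by simp
  define T where "T = {v :: real^'v. Nf \<alpha> (($) v) = 1 \<and> Mf \<alpha> (($) v) = 0}"
  have contN: "continuous_on UNIV (\<lambda>v::real^'v. Nf \<alpha> (($) v))"
    unfolding Nf_def by (intro continuous_intros)
  have contM: "continuous_on UNIV (\<lambda>v::real^'v. Mf \<alpha> (($) v))"
    unfolding Mf_def by (intro continuous_intros)
  have contD: "continuous_on T (\<lambda>v::real^'v. Dir c \<alpha> (($) v))"
    unfolding Dir_def by (intro continuous_intros) auto
  have closedT: "closed T"
    unfolding T_def by (intro closed_Collect_conj closed_Collect_eq contN contM continuous_on_const)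
  have boundedT: "bounded T"
    unfolding bounded_iff
  proof (intro exI ballI)
    fix v assume "v \<in> T"
    then have N1: "Nf \<alpha> (($) v) = 1" unfolding T_def by simp
    have "\<bar>v $ i\<bar> \<le> 1" for i
    proof -
      have "(v $ i)\<^sup>2 \<le> \<alpha> i * (v $ i)\<^sup>2" using age1[of i] by (simp add: mult_right_mono[of 1 "\<alpha> i" "(v $ i)\<^sup>2", simplified])
      also have "\<dots> \<le> Nf \<alpha> (($) v)" unfolding Nf_def
        by (rule member_le_sum[where f="\<lambda>x. \<alpha> x * (v $ x)\<^sup>2"]) (auto intro: mult_nonneg_nonneg ann)
      finally show ?thesis using N1 abs_square_le_1 by auto
    qed
    then have "(\<Sum>i\<in>UNIV. \<bar>v $ i\<bar>) \<le> (\<Sum>i\<in>(UNIV::'v set). 1)" by (intro sum_mono) auto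
    then show "norm v \<le> real CARD('v)" using norm_le_l1_cart[of v] by simp
  qed
  have compactT: "compact T" using closedT boundedT by (simp add: compact_eq_bounded_closed)
  define h0 where "h0 x = (if x = a then 1 / \<alpha> a else 0) - (if x = b then 1 / \<alpha> b else 0)" for x
  have Mh0: "Mf \<alpha> h0 = 0"
  proof -
    have "Mf \<alpha> h0 = (\<Sum>x\<in>UNIV. (if x = a then 1 else 0) - (if x = b then (1::real) else 0))"
      unfolding Mf_def h0_def using apos[of a] apos[of b] by (intro sum.cong refl) (auto simp: field_simps)
    then show ?thesis by (simp add: sum_subtractf)
  qed
  have Nh0: "0 < Nf \<alpha> h0"
  proof -
    have "\<alpha> a * (h0 a)\<^sup>2 \<le> Nf \<alpha> h0" unfolding Nf_def
      by (rule member_le_sum[where f="\<lambda>x. \<alpha> x * (h0 x)\<^sup>2"]) (auto intro: mult_nonneg_nonneg ann)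
    moreover have "0 < \<alpha> a * (h0 a)\<^sup>2" using two apos[of a] by (simp add: h0_def)
    ultimately show ?thesis by linarith
  qed
  have scaleT: "(\<chi> x. (1 / sqrt (Nf \<alpha> h)) * h x) \<in> T \<and> Dir c \<alpha> (($) (\<chi> x. (1 / sqrt (Nf \<alpha> h)) * h x)) = Dir c \<alpha> h / Nf \<alpha> h"
    if "Mf \<alpha> h = 0" "0 < Nf \<alpha> h" for h
  proof -
    have e: "($) (\<chi> x. (1 / sqrt (Nf \<alpha> h)) * h x) = (\<lambda>x. (1 / sqrt (Nf \<alpha> h)) * h x)" by auto
    have s: "(1 / sqrt (Nf \<alpha> h))\<^sup>2 = 1 / Nf \<alpha> h" using that by (simp add: power_divide)
    show ?thesis unfolding T_def mem_Collect_eq e Nf_scale Mf_scale Dir_scale s using that by simp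
  qed
  have Tne: "T \<noteq> {}" using scaleT[OF Mh0 Nh0] by auto
  obtain v0 where v0: "v0 \<in> T" and vmin: "\<And>v. v \<in> T \<Longrightarrow> Dir c \<alpha> (($) v0) \<le> Dir c \<alpha> (($) v)"
    using continuous_attains_inf[OF compactT Tne contD] by blast
  define f0 where "f0 = ($) v0"
  define q where "q = Dir c \<alpha> f0"
  have Nf0: "Nf \<alpha> f0 = 1" and Mf0: "Mf \<alpha> f0 = 0" using v0 unfolding T_def f0_def by auto
  have poinc: "q * Nf \<alpha> h \<le> Dir c \<alpha> h" if "Mf \<alpha> h = 0" for h
  proof (cases "Nf \<alpha> h = 0")
    case True then show ?thesis using Dir_nonneg[of c \<alpha> h] cnn ann by simp
  next
    case False
    have "0 \<le> Nf \<alpha> h" using Nf_nonneg[of \<alpha> h] ann by blast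
    then have Np: "0 < Nf \<alpha> h" using False by linarith
    have "q \<le> Dir c \<alpha> h / Nf \<alpha> h" using vmin[of "\<chi> x. (1 / sqrt (Nf \<alpha> h)) * h x"] scaleT[OF that Np]
      unfolding q_def f0_def by simp
    then show ?thesis using Np by (simp add: field_simps)
  qed
  have qpos: "0 < q"
  proof (rule ccontr)
    assume "\<not> 0 < q"
    then have q0: "q = 0" using Dir_nonneg[of c \<alpha> f0] cnn ann unfolding q_def by force
    have edge: "f0 y = f0 x" if "0 < c x y" for x y
    proof -
      have S0: "(\<Sum>x\<in>UNIV. \<Sum>y\<in>UNIV. \<alpha> x * \<alpha> y * c x y * (f0 y - f0 x)\<^sup>2) = 0"
        using q0 unfolding q_def Dir_def by simp
      have nn: "0 \<le> \<alpha> x * \<alpha> y * c x y * (f0 y - f0 x)\<^sup>2" for x y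
        using ann cnn by (intro mult_nonneg_nonneg) auto
      have "(\<Sum>y\<in>UNIV. \<alpha> x * \<alpha> y * c x y * (f0 y - f0 x)\<^sup>2) = 0"
        using S0 sum_nonneg_eq_0_iff[of UNIV "\<lambda>x. \<Sum>y\<in>UNIV. \<alpha> x * \<alpha> y * c x y * (f0 y - f0 x)\<^sup>2"] nn
        by (simp add: sum_nonneg)
      then have "\<alpha> x * \<alpha> y * c x y * (f0 y - f0 x)\<^sup>2 = 0"
        using sum_nonneg_eq_0_iff[of UNIV "\<lambda>y. \<alpha> x * \<alpha> y * c x y * (f0 y - f0 x)\<^sup>2"] nn by auto
      moreover have "0 < \<alpha> x * \<alpha> y * c x y" using apos that by simp
      ultimately have "(f0 y - f0 x)\<^sup>2 = 0" by (metis mult_eq_0_iff less_irrefl)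
      then show ?thesis by simp
    qed
    have const: "f0 x = f0 a" for x
    proof -
      have "(a, x) \<in> {(a, b). 0 < c a b}\<^sup>*" by (rule conn)
      then show ?thesis
      proof (induction rule: rtrancl_induct)
        case base then show ?case by simp
      next
        case (step y z) then show ?case using edge[of y z] by simp
      qed
    qed
    have "Mf \<alpha> f0 = f0 a * (\<Sum>x\<in>UNIV. \<alpha> x)" unfolding Mf_def sum_distrib_left using const by (intro sum.cong refl) (metis mult.commute)
    moreover have "0 < (\<Sum>x\<in>UNIV. \<alpha> x)" using apos by (intro sum_pos) auto
    ultimately have "f0 a = 0" using Mf0 by simp
    then have "Nf \<alpha> f0 = 0" unfolding Nf_def using const by simp
    then show False using Nf0 by simp
  qed
  define E where "E x = RWgen c \<alpha> f0 x + q * f0 x" for x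
  have orth: "(\<Sum>x\<in>UNIV. \<alpha> x * h x * E x) = 0" if hm: "Mf \<alpha> h = 0" for h
  proof -
    define B where "B = (\<Sum>x\<in>UNIV. \<alpha> x * h x * (\<Sum>y\<in>UNIV. c x y * \<alpha> y * (f0 y - f0 x)))"
    define P where "P = (\<Sum>x\<in>UNIV. \<alpha> x * f0 x * h x)"
    have "0 \<le> t * (- 2 * (B + q * P)) + t\<^sup>2 * (Dir c \<alpha> h - q * Nf \<alpha> h)" for t
    proof -
      have "Mf \<alpha> (\<lambda>x. f0 x + t * h x) = 0" using Mf_add[of \<alpha> f0 t h] Mf0 hm by simp
      then have "q * Nf \<alpha> (\<lambda>x. f0 x + t * h x) \<le> Dir c \<alpha> (\<lambda>x. f0 x + t * h x)" by (rule poinc)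
      then have "q * (1 + t * (2 * P) + t\<^sup>2 * Nf \<alpha> h) \<le> q - 2 * t * B + t\<^sup>2 * Dir c \<alpha> h"
        unfolding Nf_expand Dir_expand[OF csym] Nf0 q_def[symmetric] P_def B_def .
      then show ?thesis by (simp add: algebra_simps)
    qed
    then have "- 2 * (B + q * P) = 0" by (rule quad_zero)
    then have "B + q * P = 0" by (simp add: mult.commute)
    moreover have "(\<Sum>x\<in>UNIV. \<alpha> x * h x * E x) = B + q * P"
      unfolding E_def B_def P_def RWgen_def
      by (simp add: distrib_left sum.distrib sum_distrib_left mult_ac)
    ultimately show ?thesis by simp
  qed
  have sumE: "(\<Sum>x\<in>UNIV. \<alpha> x * E x) = 0"
  proof -
    have "(\<Sum>x\<in>UNIV. \<alpha> x * RWgen c \<alpha> f0 x) = (\<Sum>x\<in>UNIV. \<Sum>y\<in>UNIV. (\<alpha> x * \<alpha> y * c x y) * (f0 y - f0 x))"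
      unfolding RWgen_def sum_distrib_left by (intro sum.cong refl) (simp only: mult_ac)
    also have "\<dots> = 0" by (rule antisym_sum) (simp add: csym mult_ac)
    finally have "(\<Sum>x\<in>UNIV. \<alpha> x * RWgen c \<alpha> f0 x) = 0" .
    moreover have "(\<Sum>x\<in>UNIV. \<alpha> x * E x) = (\<Sum>x\<in>UNIV. \<alpha> x * RWgen c \<alpha> f0 x) + q * Mf \<alpha> f0"
      unfolding E_def Mf_def by (simp add: distrib_left sum.distrib sum_distrib_left mult_ac)
    ultimately show ?thesis using Mf0 by simp
  qed
  define A where "A = (\<Sum>x\<in>UNIV. \<alpha> x)"
  have Ap: "0 < A" unfolding A_def using apos by (intro sum_pos) auto
  have eig: "RWgen c \<alpha> f0 z = - q * f0 z" for z
  proof -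
    define h where "h x = (if x = z then 1 else 0) - \<alpha> z / A" for x
    have "Mf \<alpha> h = (\<Sum>x\<in>UNIV. (if x = z then \<alpha> z else 0) - \<alpha> z / A * \<alpha> x)"
      unfolding Mf_def h_def by (intro sum.cong refl) (auto simp: algebra_simps)
    also have "\<dots> = (\<Sum>x\<in>UNIV. (if x = z then \<alpha> z else 0)) - (\<Sum>x\<in>UNIV. \<alpha> z / A * \<alpha> x)"
      by (rule sum_subtractf)
    also have "\<dots> = \<alpha> z - \<alpha> z / A * A"
      unfolding A_def sum_distrib_left by simp
    finally have "Mf \<alpha> h = \<alpha> z - \<alpha> z / A * A" .
    then have "Mf \<alpha> h = 0" using Ap by simp
    then have "(\<Sum>x\<in>UNIV. \<alpha> x * h x * E x) = 0" by (rule orth)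
    moreover have "(\<Sum>x\<in>UNIV. \<alpha> x * h x * E x) = \<alpha> z * E z - \<alpha> z / A * (\<Sum>x\<in>UNIV. \<alpha> x * E x)"
    proof -
      have "(\<Sum>x\<in>UNIV. \<alpha> x * h x * E x) = (\<Sum>x\<in>UNIV. (if x = z then \<alpha> z * E z else 0) - \<alpha> z / A * (\<alpha> x * E x))"
        unfolding h_def by (intro sum.cong refl) (auto simp: algebra_simps)
      also have "\<dots> = (\<Sum>x\<in>UNIV. (if x = z then \<alpha> z * E z else 0)) - (\<Sum>x\<in>UNIV. \<alpha> z / A * (\<alpha> x * E x))"
        by (rule sum_subtractf)
      also have "\<dots> = \<alpha> z * E z - \<alpha> z / A * (\<Sum>x\<in>UNIV. \<alpha> x * E x)"
        unfolding sum_distrib_left by simp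
      finally show ?thesis .
    qed
    ultimately have "\<alpha> z * E z = 0" using sumE by simp
    then have "E z = 0" using apos[of z] by simp
    then show ?thesis unfolding E_def by simp
  qed
  have nz: "\<exists>x. f0 x \<noteq> 0"
  proof (rule ccontr)
    assume "\<not> (\<exists>x. f0 x \<noteq> 0)"
    then have "Nf \<alpha> f0 = 0" unfolding Nf_def by simp
    then show False using Nf0 by simp
  qed
  show ?thesis using qpos nz eig poinc by blast
qed

lemma lift:
  fixes c :: "'v::finite \<Rightarrow> 'v \<Rightarrow> real" and \<alpha> :: "'v \<Rightarrow> real"
  assumes csym: "\<And>x y. c x y = c y x"
    and eig: "\<And>x. RWgen c \<alpha> f x = - q * f x"
  shows "SIP_gen c \<alpha> (\<lambda>\<eta>. \<Sum>z\<in>UNIV. real (\<eta> z) * f z) \<eta> = - q * (\<Sum>z\<in>UNIV. real (\<eta> z) * f z)"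
proof -
  define F where "F \<eta> = (\<Sum>z\<in>UNIV. real (\<eta> z) * f z)" for \<eta> :: "'v \<Rightarrow> nat"
  have dF: "F (move \<eta> x y) - F \<eta> = f y - f x" if "1 \<le> \<eta> x" for x y
  proof -
    have "F (move \<eta> x y) = (\<Sum>z\<in>UNIV. real (\<eta> z) * f z - (if z = x then f z else 0) + (if z = y then f z else 0))"
      unfolding F_def using that by (intro sum.cong refl) (auto simp: move_val algebra_simps)
    also have "\<dots> = F \<eta> - f x + f y"
      unfolding F_def by (simp add: sum.distrib sum_subtractf)
    finally show ?thesis by simp
  qed
  have "SIP_gen c \<alpha> F \<eta> = (\<Sum>x\<in>UNIV. real (\<eta> x) * (\<Sum>y\<in>UNIV. c x y * (\<alpha> y + real (\<eta> y)) * (f y - f x)))"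
    unfolding SIP_gen_def
  proof (intro sum.cong refl)
    fix x
    show "real (\<eta> x) * (\<Sum>y\<in>UNIV. c x y * (\<alpha> y + real (\<eta> y)) * (F (move \<eta> x y) - F \<eta>)) =
          real (\<eta> x) * (\<Sum>y\<in>UNIV. c x y * (\<alpha> y + real (\<eta> y)) * (f y - f x))"
      using dF[of x] by (cases "\<eta> x = 0") auto
  qed
  also have "\<dots> = (\<Sum>x\<in>UNIV. real (\<eta> x) * RWgen c \<alpha> f x + (\<Sum>y\<in>UNIV. (real (\<eta> x) * real (\<eta> y) * c x y) * (f y - f x)))"
    unfolding RWgen_def by (intro sum.cong refl) (simp add: sum_distrib_left sum.distrib[symmetric] algebra_simps)
  also have "\<dots> = (\<Sum>x\<in>UNIV. real (\<eta> x) * RWgen c \<alpha> f x)"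
    using antisym_sum[of "\<lambda>x y. real (\<eta> x) * real (\<eta> y) * c x y" f] by (simp add: sum.distrib csym mult_ac)
  also have "\<dots> = - q * F \<eta>"
    unfolding F_def eig sum_distrib_left by (intro sum.cong refl) simp
  finally show ?thesis unfolding F_def .
qed

lemma compare:
  fixes c :: "'v::finite \<Rightarrow> 'v \<Rightarrow> real" and \<alpha> :: "'v \<Rightarrow> real"
  assumes cnn: "\<And>x y. 0 \<le> c x y"
    and apos: "\<And>x. 0 < \<alpha> x" and age1: "\<And>x. 1 \<le> \<alpha> x"
    and q0: "0 \<le> q"
    and poinc: "\<And>h. Mf \<alpha> h = 0 \<Longrightarrow> q * Nf \<alpha> h \<le> Dir c \<alpha> h"
    and xi: "\<And>x. \<xi> x \<le> j"
    and bdef: "\<And>x. \<beta> x = \<alpha> x + real (\<xi> x)"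
    and mz: "Mf \<beta> h = 0"
  shows "q * Nf \<beta> h \<le> real (Suc j) * Dir c \<beta> h"
proof -
  have ann: "0 \<le> \<alpha> x" for x using apos[of x] by simp
  have bnn: "0 \<le> \<beta> x" for x using ann[of x] bdef[of x] by simp
  define A where "A = (\<Sum>x\<in>UNIV. \<alpha> x)"
  have Ap: "0 < A" unfolding A_def using apos by (intro sum_pos) auto
  define m where "m = Mf \<alpha> h / A"
  define h' where "h' x = h x + (- m) * 1" for x
  have Mh': "Mf \<alpha> h' = 0"
  proof -
    have "Mf \<alpha> h' = Mf \<alpha> h + (- m) * Mf \<alpha> (\<lambda>_. 1)" unfolding h'_def by (rule Mf_add)
    also have "Mf \<alpha> (\<lambda>_. 1) = A" unfolding Mf_def A_def by simp
    finally show ?thesis unfolding m_def using Ap by simp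
  qed
  have D1: "Dir c \<alpha> h' = Dir c \<alpha> h" unfolding h'_def by (rule Dir_shift)
  have N1: "Nf \<beta> h \<le> Nf \<beta> h'"
  proof -
    have "Nf \<beta> h' = Nf \<beta> h + (- m) * (2 * (\<Sum>x\<in>UNIV. \<beta> x * h x * 1)) + (- m)\<^sup>2 * Nf \<beta> (\<lambda>_. 1)"
      unfolding h'_def by (rule Nf_expand)
    moreover have "(\<Sum>x\<in>UNIV. \<beta> x * h x * 1) = 0" using mz unfolding Mf_def by simp
    moreover have "0 \<le> Nf \<beta> (\<lambda>_. 1)" by (rule Nf_nonneg) (rule bnn)
    ultimately show ?thesis by simp
  qed
  have N2: "Nf \<beta> h' \<le> real (Suc j) * Nf \<alpha> h'"
    unfolding Nf_def sum_distrib_left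
  proof (rule sum_mono)
    fix x
    have "\<beta> x \<le> real (Suc j) * \<alpha> x"
    proof -
      have "real (\<xi> x) \<le> real j" using xi[of x] by simp
      also have "real j \<le> real j * \<alpha> x" using age1[of x] by (simp add: mult_left_mono[of 1 "\<alpha> x" "real j", simplified])
      finally show ?thesis using bdef[of x] by (simp add: algebra_simps)
    qed
    then show "\<beta> x * (h' x)\<^sup>2 \<le> real (Suc j) * (\<alpha> x * (h' x)\<^sup>2)"
      by (simp add: mult_right_mono mult.assoc[symmetric])
  qed
  have D2: "Dir c \<alpha> h \<le> Dir c \<beta> h"
    unfolding Dir_def
  proof (intro divide_right_mono sum_mono)
    fix x y
    have "\<alpha> x * \<alpha> y \<le> \<beta> x * \<beta> y"
      using bdef[of x] bdef[of y] ann[of x] ann[of y] by (intro mult_mono) auto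
    then show "\<alpha> x * \<alpha> y * c x y * (h y - h x)\<^sup>2 \<le> \<beta> x * \<beta> y * c x y * (h y - h x)\<^sup>2"
      using cnn[of x y] by (intro mult_right_mono) auto
  qed simp
  have "q * Nf \<beta> h \<le> q * Nf \<beta> h'" by (rule mult_left_mono[OF N1 q0])
  also have "\<dots> \<le> q * (real (Suc j) * Nf \<alpha> h')" by (rule mult_left_mono[OF N2 q0])
  also have "\<dots> = real (Suc j) * (q * Nf \<alpha> h')" by simp
  also have "\<dots> \<le> real (Suc j) * Dir c \<alpha> h" using poinc[OF Mh'] D1 by (intro mult_left_mono) auto
  also have "\<dots> \<le> real (Suc j) * Dir c \<beta> h" using D2 by (intro mult_left_mono) auto
  finally show ?thesis .
qed

lemma Xi0: "\<eta> \<in> Xi 0 \<Longrightarrow> \<eta> (x::'v::finite) = 0"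
  using Xi_le[of \<eta> 0 x] by simp

lemma lower:
  fixes c :: "'v::finite \<Rightarrow> 'v \<Rightarrow> real" and \<alpha> :: "'v \<Rightarrow> real"
  assumes csym: "\<And>x y. c x y = c y x" and cnn: "\<And>x y. 0 \<le> c x y"
    and apos: "\<And>x. 0 < \<alpha> x" and age1: "\<And>x. 1 \<le> \<alpha> x"
    and q0: "0 \<le> q"
    and poinc: "\<And>h. Mf \<alpha> h = 0 \<Longrightarrow> q * Nf \<alpha> h \<le> Dir c \<alpha> h"
  shows "lam \<noteq> 0 \<Longrightarrow> (\<exists>\<eta>\<in>Xi k. G \<eta> \<noteq> 0) \<Longrightarrow> (\<forall>\<eta>\<in>Xi k. - SIP_gen c \<alpha> G \<eta> = lam * G \<eta>) \<Longrightarrow> q \<le> lam"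
proof (induction k arbitrary: G)
  case 0
  then obtain \<eta> where e: "\<eta> \<in> Xi 0" "G \<eta> \<noteq> 0" by auto
  have "SIP_gen c \<alpha> G \<eta> = 0" unfolding SIP_gen_def using Xi0[OF e(1)] by simp
  then have "lam * G \<eta> = 0" using 0(3) e(1) by force
  then show ?case using 0(1) e(2) by simp
next
  case (Suc j)
  define u where "u = Pis \<alpha> G"
  have ueig: "- SIP_gen c \<alpha> u \<xi> = lam * u \<xi>" if "\<xi> \<in> Xi j" for \<xi>
  proof -
    have "SIP_gen c \<alpha> u \<xi> = (\<Sum>a\<in>UNIV. (\<alpha> a + real (\<xi> a)) * SIP_gen c \<alpha> G (addp \<xi> a))"
      unfolding u_def by (rule intertwine[OF csym])
    also have "\<dots> = (\<Sum>a\<in>UNIV. - lam * ((\<alpha> a + real (\<xi> a)) * G (addp \<xi> a)))"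
    proof (intro sum.cong refl)
      fix a
      have "- SIP_gen c \<alpha> G (addp \<xi> a) = lam * G (addp \<xi> a)" using Suc.prems(3) addp_Xi[OF that] by blast
      then have S: "SIP_gen c \<alpha> G (addp \<xi> a) = - (lam * G (addp \<xi> a))" by linarith
      show "(\<alpha> a + real (\<xi> a)) * SIP_gen c \<alpha> G (addp \<xi> a) = - lam * ((\<alpha> a + real (\<xi> a)) * G (addp \<xi> a))"
        by (simp only: S) (simp add: algebra_simps)
    qed
    also have "\<dots> = - lam * u \<xi>" unfolding u_def Pis_def sum_distrib_left ..
    finally show ?thesis by simp
  qed
  show ?case
  proof (cases "\<exists>\<xi>\<in>Xi j. u \<xi> \<noteq> 0")
    case True
    then show ?thesis using Suc.IH[of u] Suc.prems(1) ueig by blast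
  next
    case False
    then have u0: "\<And>\<xi>. \<xi> \<in> Xi j \<Longrightarrow> u \<xi> = 0" by blast
    define W where "W = (\<Sum>\<eta>\<in>Xi (Suc j). wt \<alpha> \<eta> * (G \<eta>)\<^sup>2)"
    define \<beta> where "\<beta> \<xi> x = \<alpha> x + real (\<xi> x)" for \<xi> :: "'v \<Rightarrow> nat" and x
    define hh where "hh \<xi> x = G (addp \<xi> x)" for \<xi> :: "'v \<Rightarrow> nat" and x
    have wp: "0 \<le> wt \<alpha> \<eta>" for \<eta> using wt_pos[of \<alpha> \<eta>] apos by force
    have Wpos: "0 < W"
    proof -
      obtain \<eta>0 where e: "\<eta>0 \<in> Xi (Suc j)" "G \<eta>0 \<noteq> 0" using Suc.prems(2) by blast
      have "wt \<alpha> \<eta>0 * (G \<eta>0)\<^sup>2 \<le> W" unfolding W_def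
        by (rule member_le_sum[OF e(1) _ finite_Xi]) (auto intro!: mult_nonneg_nonneg wp)
      moreover have "0 < wt \<alpha> \<eta>0 * (G \<eta>0)\<^sup>2" using e(2) wt_pos[of \<alpha> \<eta>0] apos by simp
      ultimately show ?thesis by linarith
    qed
    have L: "lam * W = (\<Sum>\<xi>\<in>Xi j. wt \<alpha> \<xi> * Dir c (\<beta> \<xi>) (hh \<xi>))"
    proof -
      have "(\<Sum>\<eta>\<in>Xi (Suc j). wt \<alpha> \<eta> * G \<eta> * SIP_gen c \<alpha> G \<eta>) = - (lam * W)"
      proof -
        have "(\<Sum>\<eta>\<in>Xi (Suc j). wt \<alpha> \<eta> * G \<eta> * SIP_gen c \<alpha> G \<eta>) = (\<Sum>\<eta>\<in>Xi (Suc j). - (lam * (wt \<alpha> \<eta> * (G \<eta>)\<^sup>2)))"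
        proof (intro sum.cong refl)
          fix \<eta> :: "'v \<Rightarrow> nat" assume "\<eta> \<in> Xi (Suc j)"
          then have "SIP_gen c \<alpha> G \<eta> = - (lam * G \<eta>)" using Suc.prems(3) by force
          then show "wt \<alpha> \<eta> * G \<eta> * SIP_gen c \<alpha> G \<eta> = - (lam * (wt \<alpha> \<eta> * (G \<eta>)\<^sup>2))"
            by (simp add: power2_eq_square mult_ac)
        qed
        then show ?thesis unfolding W_def by (simp add: sum_negf sum_distrib_left)
      qed
      moreover have "(\<Sum>\<eta>\<in>Xi (Suc j). wt \<alpha> \<eta> * G \<eta> * SIP_gen c \<alpha> G \<eta>) = - (\<Sum>\<xi>\<in>Xi j. wt \<alpha> \<xi> * Dir c (\<beta> \<xi>) (hh \<xi>))"
      proof -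
        have "(\<Sum>\<eta>\<in>Xi (Suc j). wt \<alpha> \<eta> * G \<eta> * SIP_gen c \<alpha> G \<eta>) = (\<Sum>\<xi>\<in>Xi j. - (wt \<alpha> \<xi> * Dir c (\<beta> \<xi>) (hh \<xi>)))"
          unfolding R1
        proof (intro sum.cong refl)
          fix \<xi> :: "'v \<Rightarrow> nat"
          have "Dir c (\<beta> \<xi>) (hh \<xi>) = - (\<Sum>x\<in>UNIV. \<Sum>y\<in>UNIV. \<beta> \<xi> x * \<beta> \<xi> y * c x y * hh \<xi> x * (hh \<xi> y - hh \<xi> x))"
            by (rule Dir_as_gen[OF csym])
          then show "wt \<alpha> \<xi> * (\<Sum>x\<in>UNIV. \<Sum>y\<in>UNIV. (\<alpha> x + real (\<xi> x)) * (\<alpha> y + real (\<xi> y)) * c x y * G (addp \<xi> x) * (G (addp \<xi> y) - G (addp \<xi> x)))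
             = - (wt \<alpha> \<xi> * Dir c (\<beta> \<xi>) (hh \<xi>))"
            unfolding \<beta>_def hh_def by simp
        qed
        then show ?thesis by (simp add: sum_negf)
      qed
      ultimately show ?thesis by simp
    qed
    have R: "real (Suc j) * W = (\<Sum>\<xi>\<in>Xi j. wt \<alpha> \<xi> * Nf (\<beta> \<xi>) (hh \<xi>))"
      unfolding W_def R2 Nf_def \<beta>_def hh_def ..
    have key: "q * Nf (\<beta> \<xi>) (hh \<xi>) \<le> real (Suc j) * Dir c (\<beta> \<xi>) (hh \<xi>)" if "\<xi> \<in> Xi j" for \<xi>
    proof (rule compare[OF cnn apos age1 q0 poinc])
      show "\<xi> x \<le> j" for x using Xi_le[OF that] .
      show "\<beta> \<xi> x = \<alpha> x + real (\<xi> x)" for x unfolding \<beta>_def ..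
      show "Mf (\<beta> \<xi>) (hh \<xi>) = 0" using u0[OF that] unfolding Mf_def u_def Pis_def \<beta>_def hh_def .
    qed
    have "q * (real (Suc j) * W) = (\<Sum>\<xi>\<in>Xi j. wt \<alpha> \<xi> * (q * Nf (\<beta> \<xi>) (hh \<xi>)))"
      unfolding R sum_distrib_left by (intro sum.cong refl) (simp only: mult_ac)
    also have "\<dots> \<le> (\<Sum>\<xi>\<in>Xi j. wt \<alpha> \<xi> * (real (Suc j) * Dir c (\<beta> \<xi>) (hh \<xi>)))"
      by (intro sum_mono mult_left_mono key wp)
    also have "\<dots> = real (Suc j) * (lam * W)"
      unfolding L sum_distrib_left by (intro sum.cong refl) (simp only: mult_ac)
    finally have "real (Suc j) * (q * W) \<le> real (Suc j) * (lam * W)" by (simp only: mult_ac)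
    then have "q * W \<le> lam * W" by simp
    then show ?thesis using Wpos by simp
  qed
qed

theorem corollary1p2:
  fixes c :: "'v::finite \<Rightarrow> 'v \<Rightarrow> real" and \<alpha> :: "'v \<Rightarrow> real"
  assumes "weighted_graph c" and "graph_connected c"
    and "\<forall>x. 0 < \<alpha> x" and "\<forall>x. 1 \<le> \<alpha> x"
  shows "gap_SIP c \<alpha> = gap_RW c \<alpha>"
proof -
  have csym: "\<And>x y. c x y = c y x" and cnn: "\<And>x y. 0 \<le> c x y"
    using assms(1) unfolding weighted_graph_def by auto
  have conn: "\<And>x y. (x, y) \<in> {(a, b). 0 < c a b}\<^sup>*" using assms(2) unfolding graph_connected_def by auto
  have apos: "\<And>x. 0 < \<alpha> x" and age1: "\<And>x. 1 \<le> \<alpha> x" using assms(3,4) by auto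
  define S where "S k = {lam. lam \<noteq> 0 \<and> SIP_eigenvalue c \<alpha> k lam}" for k
  have gapS: "gap c \<alpha> k = Inf (S k)" for k by (simp add: gap_def S_def)
  show ?thesis
  proof (cases "\<exists>a b::'v. a \<noteq> b")
    case True
    then obtain a b :: 'v where ab: "a \<noteq> b" by blast
    obtain q f where q: "0 < q" and nz: "\<exists>x. f x \<noteq> 0" and eig: "\<forall>x. RWgen c \<alpha> f x = - q * f x"
      and poinc: "\<forall>h. Mf \<alpha> h = 0 \<longrightarrow> q * Nf \<alpha> h \<le> Dir c \<alpha> h"
      using rw_spectral[where \<alpha>=\<alpha>, OF csym cnn conn apos age1 ab] by blast
    have gk: "gap c \<alpha> k = q" if k1: "1 \<le> k" for k
    proof -
      have mem: "q \<in> S k"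
      proof -
        obtain x0 where fx0: "f x0 \<noteq> 0" using nz by blast
        define F where "F \<eta> = (\<Sum>z\<in>UNIV. real (\<eta> z) * f z)" for \<eta> :: "'v \<Rightarrow> nat"
        define \<eta>0 where "\<eta>0 = (\<lambda>_::'v. 0::nat)(x0 := k)"
        have "\<eta>0 \<in> Xi k" unfolding Xi_def \<eta>0_def using sum_upd_nat[of "\<lambda>_::'v. 0::nat" x0 k] by simp
        moreover have "F \<eta>0 = real k * f x0"
        proof -
          have "F \<eta>0 = (\<Sum>z\<in>UNIV. if z = x0 then real k * f x0 else 0)"
            unfolding F_def \<eta>0_def by (intro sum.cong refl) auto
          then show ?thesis by simp
        qed
        then have "F \<eta>0 \<noteq> 0" using fx0 k1 by simp
        moreover have "- SIP_gen c \<alpha> F \<eta> = q * F \<eta>" for \<eta>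
          using lift[where c=c and \<alpha>=\<alpha> and f=f and q=q and \<eta>=\<eta>, OF csym] eig unfolding F_def by simp
        ultimately have "SIP_eigenvalue c \<alpha> k q" unfolding SIP_eigenvalue_def by blast
        then show ?thesis unfolding S_def using q by simp
      qed
      have low: "q \<le> lam" if "lam \<in> S k" for lam
      proof -
        from that obtain G where "lam \<noteq> 0" "\<exists>\<eta>\<in>Xi k. G \<eta> \<noteq> 0" "\<forall>\<eta>\<in>Xi k. - SIP_gen c \<alpha> G \<eta> = lam * G \<eta>"
          unfolding S_def SIP_eigenvalue_def by blast
        then show ?thesis using lower[where c=c and \<alpha>=\<alpha> and q=q and lam=lam and k=k and G=G, OF csym cnn apos age1] q poinc by auto
      qed
      show ?thesis unfolding gapS by (rule cInf_eq_minimum[OF mem low])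
    qed
    have "gap_SIP c \<alpha> = (INF k\<in>{2::nat..}. q)"
      unfolding gap_SIP_def by (rule INF_cong) (auto intro: gk)
    also have "\<dots> = q" by (rule cINF_const) auto
    also have "\<dots> = gap_RW c \<alpha>" unfolding gap_RW_def using gk[of 1] by simp
    finally show ?thesis .
  next
    case False
    then have same: "\<And>x y::'v. x = y" by blast
    have Sk: "S k = {}" for k
    proof (rule ccontr)
      assume "S k \<noteq> {}"
      then obtain lam G \<eta> where l0: "lam \<noteq> 0" and e: "\<eta> \<in> Xi k" "G \<eta> \<noteq> 0"
        and ev: "\<forall>\<eta>\<in>Xi k. - SIP_gen c \<alpha> G \<eta> = lam * G \<eta>"
        unfolding S_def SIP_eigenvalue_def by blast
      have "SIP_gen c \<alpha> G \<eta> = 0"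
        unfolding SIP_gen_def
      proof (intro sum.neutral ballI)
        fix x :: 'v
        have T: "real (\<eta> x) * (c x y * (\<alpha> y + real (\<eta> y)) * (G (move \<eta> x y) - G \<eta>)) = 0" for y
          using same[of y x] move_self[of \<eta> x] by (cases "\<eta> x = 0") auto
        then show "real (\<eta> x) * (\<Sum>y\<in>UNIV. c x y * (\<alpha> y + real (\<eta> y)) * (G (move \<eta> x y) - G \<eta>)) = 0"
          unfolding sum_distrib_left by (simp only: T sum.neutral_const)
      qed
      then have "lam * G \<eta> = 0" using ev e(1) by force
      then show False using l0 e(2) by simp
    qed
    have "gap_SIP c \<alpha> = (INF k\<in>{2::nat..}. Inf ({}::real set))"
      unfolding gap_SIP_def gapS Sk ..
    also have "\<dots> = Inf {}" by (rule cINF_const) auto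
    also have "\<dots> = gap_RW c \<alpha>" unfolding gap_RW_def gapS Sk ..
    finally show ?thesis .
  qed
qed

end
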